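(* Let $\mathcal{J}=\langle U,g,f\rangle$ be an optimal control problem satisfying the standing assumptions below, and let $V:\mathbb{R}^d\to\mathbb{R}$. Then $\mathcal{J}$ admits $V$ as its general limit value if and only if there is general uniform convergence of the value functions $\{V_\theta\}$ to $V$, i.e. for every $\varepsilon>0$ there exist $S>0$ and $\eta>0$ such that every $\theta\in\Delta(\mathbb{R}_+)$ with $\overline{TV}_S(\theta)\leq\eta$ satisfies $\|V_\theta-V\|_\infty\leq\varepsilon$.
   Context: Setting: $U$ is a metric space, $g:\mathbb{R}^d\times U\to\mathbb{R}$ is Borel measurable and bounded, $f:\mathbb{R}^d\times U\to\mathbb{R}^d$ is Borel measurable with $\|f(y,u)-f(\bar y,u)\|\leq L\|y-\bar y\|$ and $\|f(y,u)\|\leq a(1+\|y\|)$ for constants $L\ge0,a>0$. $\mathcal{U}$ is the set of measurable controls $u:[0,+\infty)\to U$; $y(t,u,y_0)$ is the solution of $y'=f(y,u)$, $y(0)=y_0$. For a Borel probability measure $\theta\in\Delta(\mathbb{R}_+)$ (an evaluation), $V_\theta(y_0)=\inf_{u\in\mathcal{U}}\int_{[0,+\infty)} g(y(s,u,y_0),u(s))\,d\theta(s)$. $TV_s(\theta)=\sup_{Q\in\mathcal{B}(\mathbb{R}_+)}|\theta(Q)-\theta(Q+s)|$, $\overline{TV}_S(\theta)=\sup_{0\le s\le S}TV_s(\theta)$. A sequence $(\theta^k)$ satisfies the long-term condition (LTC) if $\overline{TV}_S(\theta^k)\to0$ for every $S>0$. $\mathcal{J}$ admits $V$ as general limit value if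 for every sequence $(\theta^k)$ satisfying the LTC, $V_{\theta^k}\to V$ uniformly on $\mathbb{R}^d$. *)

theory Defs
  imports "HOL-Analysis.Analysis" "HOL-Probability.Probability"
begin

text \<open>Evaluations: Borel probability measures on R_+ = [0,+inf), represented as
  probability measures on the Borel sets of the real line carried by [0,+inf).\<close>
definition evaluation :: "real measure \<Rightarrow> bool" where
  "evaluation \<theta> \<longleftrightarrow> prob_space \<theta> \<and> sets \<theta> = sets borel \<and> emeasure \<theta> {..<0} = 0"

definition TV :: "real measure \<Rightarrow> real \<Rightarrow> real" where
  "TV \<theta> s = Sup {\<bar>measure \<theta> Q - measure \<theta> ((\<lambda>x. x + s) ` Q)\<bar> | Q. Q \<in> sets borel \<and> Q \<subseteq> {0..}}"

definition TVbar :: "real measure \<Rightarrow> real \<Rightarrow> real" where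
  "TVbar \<theta> S = Sup {TV \<theta> s | s. 0 \<le> s \<and> s \<le> S}"

definition LTC :: "(nat \<Rightarrow> real measure) \<Rightarrow> bool" where
  "LTC \<Theta> \<longleftrightarrow> (\<forall>S>0. (\<lambda>k. TVbar (\<Theta> k) S) \<longlonglongrightarrow> 0)"

text \<open>Measurable controls u : [0,+inf) -> U (Borel measurable; values at negative times are irrelevant).\<close>
definition control :: "(real \<Rightarrow> 'u::metric_space) \<Rightarrow> bool" where
  "control u \<longleftrightarrow> u \<in> measurable (restrict_space borel {0..}) borel"

definition trajectory ::
  "('a::euclidean_space \<Rightarrow> 'u \<Rightarrow> 'a) \<Rightarrow> (real \<Rightarrow> 'u) \<Rightarrow> 'a \<Rightarrow> (real \<Rightarrow> 'a) \<Rightarrow> bool" where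
  "trajectory f u y0 y \<longleftrightarrow> continuous_on {0..} y \<and>
     (\<forall>t\<ge>0. (\<lambda>s. f (y s) (u s)) integrable_on {0..t} \<and>
            y t = y0 + integral {0..t} (\<lambda>s. f (y s) (u s)))"

definition val :: "('a::euclidean_space \<Rightarrow> 'u::metric_space \<Rightarrow> 'a) \<Rightarrow> ('a \<Rightarrow> 'u \<Rightarrow> real)
    \<Rightarrow> real measure \<Rightarrow> 'a \<Rightarrow> real" where
  "val f g \<theta> y0 = Inf {integral\<^sup>L (restrict_space \<theta> {0..}) (\<lambda>s. g (y s) (u s)) | u y.
       control u \<and> trajectory f u y0 y}"

definition general_limit_value ::
  "('a::euclidean_space \<Rightarrow> 'u::metric_space \<Rightarrow> 'a) \<Rightarrow> ('a \<Rightarrow> 'u \<Rightarrow> real) \<Rightarrow> ('a \<Rightarrow> real) \<Rightarrow> bool" where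
  "general_limit_value f g V \<longleftrightarrow>
     (\<forall>\<Theta>. (\<forall>k. evaluation (\<Theta> k)) \<and> LTC \<Theta> \<longrightarrow>
        uniform_limit UNIV (\<lambda>k. val f g (\<Theta> k)) V sequentially)"

definition general_uniform_convergence ::
  "('a::euclidean_space \<Rightarrow> 'u::metric_space \<Rightarrow> 'a) \<Rightarrow> ('a \<Rightarrow> 'u \<Rightarrow> real) \<Rightarrow> ('a \<Rightarrow> real) \<Rightarrow> bool" where
  "general_uniform_convergence f g V \<longleftrightarrow>
     (\<forall>\<epsilon>>0. \<exists>S>0. \<exists>\<eta>>0. \<forall>\<theta>. evaluation \<theta> \<and> TVbar \<theta> S \<le> \<eta> \<longrightarrow>
        (\<forall>y. \<bar>val f g \<theta> y - V y\<bar> \<le> \<epsilon>))"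

end

theory Submission
  imports Defs
begin

lemma meas_le1: "evaluation \<theta> \<Longrightarrow> measure \<theta> X \<le> 1"
  unfolding evaluation_def
  by (cases "X \<in> sets \<theta>") (auto simp: prob_space.prob_le_1 measure_notin_sets)

lemma TV_bounds:
  assumes "evaluation \<theta>" shows "0 \<le> TV \<theta> s \<and> TV \<theta> s \<le> 1"
proof -
  let ?A = "{\<bar>measure \<theta> Q - measure \<theta> ((\<lambda>x. x + s) ` Q)\<bar> | Q. Q \<in> sets borel \<and> Q \<subseteq> {0..}}"
  have e: "0 \<in> ?A" by (rule CollectI, rule exI[of _ "{}"]) auto
  have b: "\<And>x. x \<in> ?A \<Longrightarrow> x \<le> 1"
  proof -
    fix x assume "x \<in> ?A"
    then obtain Q where "x = \<bar>measure \<theta> Q - measure \<theta> ((\<lambda>x. x + s) ` Q)\<bar>" by blast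
    moreover have "measure \<theta> Q \<le> 1" "measure \<theta> ((\<lambda>x. x + s) ` Q) \<le> 1"
      using meas_le1[OF assms] by auto
    moreover have "measure \<theta> Q \<ge> 0" "measure \<theta> ((\<lambda>x. x + s) ` Q) \<ge> 0" by auto
    ultimately show "x \<le> 1" by linarith
  qed
  have bdd: "bdd_above ?A" using b by (auto simp: bdd_above_def)
  have "0 \<le> Sup ?A" using cSup_upper[OF e bdd] .
  moreover have "Sup ?A \<le> 1" using e b by (intro cSup_least) auto
  ultimately show ?thesis unfolding TV_def by simp
qed

lemma TVbar_mono:
  assumes "evaluation \<theta>" "0 \<le> S" "S \<le> S'"
  shows "TVbar \<theta> S \<le> TVbar \<theta> S'"
  unfolding TVbar_def
proof (rule cSup_subset_mono)
  show "{TV \<theta> s |s. 0 \<le> s \<and> s \<le> S} \<noteq> {}" using assms by auto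
  show "bdd_above {TV \<theta> s |s. 0 \<le> s \<and> s \<le> S'}"
    using TV_bounds[OF assms(1)] by (auto simp: bdd_above_def)
  show "{TV \<theta> s |s. 0 \<le> s \<and> s \<le> S} \<subseteq> {TV \<theta> s |s. 0 \<le> s \<and> s \<le> S'}"
    using assms by auto
qed

lemma TVbar_nonneg:
  assumes "evaluation \<theta>" "0 \<le> S"
  shows "0 \<le> TVbar \<theta> S"
proof -
  have e: "TV \<theta> 0 \<in> {TV \<theta> s |s. 0 \<le> s \<and> s \<le> S}" using assms by auto
  have "bdd_above {TV \<theta> s |s. 0 \<le> s \<and> s \<le> S}"
    using TV_bounds[OF assms(1)] by (auto simp: bdd_above_def)
  from cSup_upper[OF e this] TV_bounds[OF assms(1), of 0] show ?thesis
    unfolding TVbar_def by linarith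
qed

theorem mainTheorem6:
  fixes f :: "'a::euclidean_space \<Rightarrow> 'u::metric_space \<Rightarrow> 'a"
    and g :: "'a \<Rightarrow> 'u \<Rightarrow> real"
    and V :: "'a \<Rightarrow> real"
    and L a :: real
  assumes g_meas: "(\<lambda>(y, u). g y u) \<in> borel_measurable borel"
    and g_bdd: "\<exists>M. \<forall>y u. \<bar>g y u\<bar> \<le> M"
    and f_meas: "(\<lambda>(y, u). f y u) \<in> borel_measurable borel"
    and L_nonneg: "L \<ge> 0" and a_pos: "a > 0"
    and f_lip: "\<forall>y y' u. norm (f y u - f y' u) \<le> L * norm (y - y')"
    and f_growth: "\<forall>y u. norm (f y u) \<le> a * (1 + norm y)"
  shows "general_limit_value f g V \<longleftrightarrow> general_uniform_convergence f g V"
proof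
  assume G: "general_uniform_convergence f g V"
  show "general_limit_value f g V"
    unfolding general_limit_value_def
  proof (intro allI impI)
    fix \<Theta> assume H: "(\<forall>k. evaluation (\<Theta> k)) \<and> LTC \<Theta>"
    show "uniform_limit UNIV (\<lambda>k. val f g (\<Theta> k)) V sequentially"
      unfolding uniform_limit_iff
    proof (intro allI impI)
      fix e :: real assume e: "e > 0"
      then obtain S \<eta> where S: "S > 0" "\<eta> > 0" and
        SH: "\<And>\<theta>. evaluation \<theta> \<Longrightarrow> TVbar \<theta> S \<le> \<eta> \<Longrightarrow> \<forall>y. \<bar>val f g \<theta> y - V y\<bar> \<le> e/2"
        using G unfolding general_uniform_convergence_def
        by (metis half_gt_zero)
      have "(\<lambda>k. TVbar (\<Theta> k) S) \<longlonglongrightarrow> 0" using H S unfolding LTC_def by auto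
      then have "\<forall>\<^sub>F k in sequentially. dist (TVbar (\<Theta> k) S) 0 < \<eta>"
        using S(2) by (rule tendstoD)
      then show "\<forall>\<^sub>F k in sequentially. \<forall>x\<in>UNIV. dist (val f g (\<Theta> k) x) (V x) < e"
      proof (rule eventually_mono)
        fix k assume "dist (TVbar (\<Theta> k) S) 0 < \<eta>"
        then have "TVbar (\<Theta> k) S \<le> \<eta>" by (simp add: dist_real_def)
        then have Ak: "\<forall>y. \<bar>val f g (\<Theta> k) y - V y\<bar> \<le> e/2" using SH H by blast
        show "\<forall>x\<in>UNIV. dist (val f g (\<Theta> k) x) (V x) < e"
        proof (intro ballI)
          fix x :: 'a
          have "\<bar>val f g (\<Theta> k) x - V x\<bar> \<le> e/2" using Ak by blast
          then show "dist (val f g (\<Theta> k) x) (V x) < e" using e by (simp add: dist_real_def)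
        qed
      qed
    qed
  qed
next
  assume G: "general_limit_value f g V"
  show "general_uniform_convergence f g V"
  proof (rule ccontr)
    assume "\<not> general_uniform_convergence f g V"
    then obtain e :: real where e: "e > 0" and
      N: "\<And>S \<eta>. S > 0 \<Longrightarrow> \<eta> > 0 \<Longrightarrow> \<exists>\<theta>. evaluation \<theta> \<and> TVbar \<theta> S \<le> \<eta> \<and> (\<exists>y. \<bar>val f g \<theta> y - V y\<bar> > e)"
      unfolding general_uniform_convergence_def by (auto simp: not_le)
    have "\<forall>k::nat. \<exists>\<theta>. evaluation \<theta> \<and> TVbar \<theta> (real k + 1) \<le> 1 / (real k + 1) \<and> (\<exists>y. \<bar>val f g \<theta> y - V y\<bar> > e)"
      using N by auto
    then obtain \<Theta> where T: "\<And>k. evaluation (\<Theta> k)" "\<And>k. TVbar (\<Theta> k) (real k + 1) \<le> 1 / (real k + 1)"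
      "\<And>k. \<exists>y. \<bar>val f g (\<Theta> k) y - V y\<bar> > e"
      by metis
    have "LTC \<Theta>" unfolding LTC_def
    proof (intro allI impI)
      fix S :: real assume S: "S > 0"
      obtain n :: nat where n: "S \<le> real n" using real_arch_simple by blast
      have "\<forall>\<^sub>F k in sequentially. norm (TVbar (\<Theta> k) S) \<le> 1 / (real k + 1)"
        using eventually_ge_at_top[of n]
      proof (rule eventually_mono)
        fix k assume "n \<le> k"
        then have "S \<le> real k + 1" using n by linarith
        then have "TVbar (\<Theta> k) S \<le> TVbar (\<Theta> k) (real k + 1)"
          using TVbar_mono[OF T(1)] S by auto
        moreover have "0 \<le> TVbar (\<Theta> k) S" using TVbar_nonneg[OF T(1)] S by auto
        ultimately show "norm (TVbar (\<Theta> k) S) \<le> 1 / (real k + 1)" using T(2)[of k] by simp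
      qed
      moreover have "(\<lambda>k. 1 / (real k + 1)) \<longlonglongrightarrow> 0"
        using LIMSEQ_inverse_real_of_nat by (simp add: inverse_eq_divide add.commute)
      ultimately show "(\<lambda>k. TVbar (\<Theta> k) S) \<longlonglongrightarrow> 0"
        by (rule Lim_null_comparison)
    qed
    then have "uniform_limit UNIV (\<lambda>k. val f g (\<Theta> k)) V sequentially"
      using G T(1) unfolding general_limit_value_def by blast
    then have "\<forall>\<^sub>F k in sequentially. \<forall>x\<in>UNIV. dist (val f g (\<Theta> k) x) (V x) < e"
      using e unfolding uniform_limit_iff by blast
    then obtain k where "\<forall>x. dist (val f g (\<Theta> k) x) (V x) < e"
      by (auto simp: eventually_sequentially)
    moreover obtain y where "\<bar>val f g (\<Theta> k) y - V y\<bar> > e" using T(3)[of k] by blast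
    ultimately show False by (metis dist_real_def less_asym)
  qed
qed

end
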